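(* Let $A(\cdot),B(\cdot),C(\cdot)$ be real, piecewise-continuous, $T$-periodic matrix functions (sizes $n\times n$, $n\times m$, $k\times n$) with $(A,B)$ controllable and $(C,A)$ observable, and let $\alpha(\cdot)>0$ be $T$-periodic. Let $P(t)=P(t+T)\succ0$ satisfy $$\dot P(t)= A(t)P(t)+P(t)A(t)^\top+\alpha(t)P(t)+\frac{1}{\alpha(t)}B(t)B(t)^\top,$$ and let $Q(t)=Q(t+T)\succ0$ satisfy $$-\dot Q(t)=Q(t)A(t)+A(t)^\top Q(t)+\alpha(t)Q(t)+C(t)^\top C(t).$$ Then $$\operatorname{size}(\mathcal{E}_\alpha)=\frac1T\int_0^T\frac{\mathrm{trace}\big(B(t)^\top Q(t)B(t)\big)}{\alpha(t)}\,dt.$$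
   Context: $\mathcal{E}_\alpha(t)=\{\mathrm{x}\in\mathbb{R}^n:\mathrm{x}^\top P(t)^{-1}\mathrm{x}\le1\}$ is the minimal periodic inescapable ellipsoid associated with $\alpha$ for the system $\dot x=A(t)x+B(t)w$, $z=C(t)x$, $\|w(t)\|\le1$, where $P$ is the periodic solution above. Its size is defined as $\operatorname{size}(\mathcal{E}_\alpha)=\frac1T\int_0^T\mathrm{trace}\big(C(t)P(t)C(t)^\top\big)\,dt$. *)

theory Defs
  imports "HOL-Analysis.Analysis"
begin

definition pw_continuous :: "(real \<Rightarrow> 'a::real_normed_vector) \<Rightarrow> bool" where
  "pw_continuous f \<longleftrightarrow>
     (\<forall>a b. \<exists>S. finite S \<and> continuous_on ({a..b} - S) f \<and>
        (\<forall>s\<in>S. (\<exists>l. (f \<longlongrightarrow> l) (at_left s)) \<and> (\<exists>r. (f \<longlongrightarrow> r) (at_right s))))"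

definition periodic :: "real \<Rightarrow> (real \<Rightarrow> 'a) \<Rightarrow> bool" where
  "periodic T f \<longleftrightarrow> (\<forall>t. f (t + T) = f t)"

text \<open>x is a (Caratheodory-type) solution of x' = F t (x t): continuous everywhere and
  differentiable with the prescribed derivative except at finitely many points of every
  bounded interval (the discontinuity points of the piecewise continuous data).\<close>
definition solves_ode :: "(real \<Rightarrow> 'a::real_normed_vector) \<Rightarrow> (real \<Rightarrow> 'a \<Rightarrow> 'a) \<Rightarrow> bool" where
  "solves_ode x F \<longleftrightarrow> continuous_on UNIV x \<and>
     (\<forall>a b. \<exists>S. finite S \<and> (\<forall>t\<in>{a..b} - S. (x has_vector_derivative F t (x t)) (at t)))"

definition controllable ::
  "(real \<Rightarrow> real^'n^'n) \<Rightarrow> (real \<Rightarrow> real^'m^'n) \<Rightarrow> bool" where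
  "controllable A B \<longleftrightarrow>
     (\<forall>t0 (x0::real^'n) x1. \<exists>t1>t0. \<exists>(u::real \<Rightarrow> real^'m) x.
        pw_continuous u \<and> solves_ode x (\<lambda>t y. A t *v y + B t *v u t) \<and>
        x t0 = x0 \<and> x t1 = x1)"

definition observable ::
  "(real \<Rightarrow> real^'n^'k) \<Rightarrow> (real \<Rightarrow> real^'n^'n) \<Rightarrow> bool" where
  "observable C A \<longleftrightarrow>
     (\<forall>t0. \<exists>t1>t0. \<forall>x::real \<Rightarrow> real^'n.
        solves_ode x (\<lambda>t y. A t *v y) \<and> (\<forall>t\<in>{t0..t1}. C t *v x t = 0) \<longrightarrow> x t0 = 0)"

definition pos_def :: "real^'n^'n \<Rightarrow> bool" where
  "pos_def M \<longleftrightarrow> transpose M = M \<and> (\<forall>x. x \<noteq> 0 \<longrightarrow> x \<bullet> (M *v x) > 0)"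

text \<open>size of the ellipsoid {x. x^T P(t)^{-1} x \<le> 1}: (1/T) \<integral>_0^T trace(C P C^T).\<close>
definition ellipsoid_size ::
  "real \<Rightarrow> (real \<Rightarrow> real^'n^'k) \<Rightarrow> (real \<Rightarrow> real^'n^'n) \<Rightarrow> real" where
  "ellipsoid_size T C P = (1 / T) * integral {0..T} (\<lambda>t. trace (C t ** P t ** transpose (C t)))"

end

theory Submission
  imports Defs
begin

lemma trace_scaleR: "trace (c *\<^sub>R (M::real^'n^'n)) = c * trace M"
  by (simp add: trace_def sum_distrib_left)

lemma trace_uminus: "trace (- (M::real^'n^'n)) = - trace M"
  by (simp add: trace_def sum_negf)

lemma mm_add_r: "((X::real^'n^'m) + Y) ** (Z::real^'p^'n) = X ** Z + Y ** Z"
  by (simp add: matrix_matrix_mult_def vec_eq_iff distrib_right sum.distrib)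

lemma mm_neg_l: "(- (X::real^'n^'m)) ** (Z::real^'p^'n) = - (X ** Z)"
  by (simp add: matrix_matrix_mult_def vec_eq_iff sum_negf)

lemma mm_diff_r: "((X::real^'n^'m) - Y) ** (Z::real^'p^'n) = X ** Z - Y ** Z"
  by (simp add: matrix_matrix_mult_def vec_eq_iff left_diff_distrib sum_subtractf)

lemma bb_trace: "bounded_bilinear (\<lambda>(X::real^'n^'n) Y. trace (X ** Y))"
proof -
  have "bilinear (\<lambda>(X::real^'n^'n) Y. trace (X ** Y))"
    unfolding bilinear_def
  proof (intro allI conjI)
    fix y :: "real^'n^'n"
    show "linear (\<lambda>x. trace (x ** y))"
      by (rule linearI) (simp_all add: mm_add_r trace_add trace_scaleR scalar_matrix_assoc[symmetric])
  next
    fix x :: "real^'n^'n"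
    show "linear (\<lambda>y. trace (x ** y))"
      by (rule linearI) (simp_all add: matrix_add_ldistrib trace_add trace_scaleR matrix_scalar_ac scalar_matrix_assoc[symmetric])
  qed
  then show ?thesis by (simp add: bilinear_conv_bounded_bilinear)
qed

theorem theorem2:
  fixes A :: "real \<Rightarrow> real^'n^'n" and B :: "real \<Rightarrow> real^'m^'n"
    and C :: "real \<Rightarrow> real^'n^'k" and \<alpha> :: "real \<Rightarrow> real"
    and P Q :: "real \<Rightarrow> real^'n^'n" and T :: real
  assumes T: "T > 0"
    and pwA: "pw_continuous A" and pwB: "pw_continuous B" and pwC: "pw_continuous C"
    and perA: "periodic T A" and perB: "periodic T B" and perC: "periodic T C"
    and ctrb: "controllable A B" and obsv: "observable C A"
    and alpha_pos: "\<And>t. \<alpha> t > 0" and per_alpha: "periodic T \<alpha>"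
    and perP: "periodic T P" and posP: "\<And>t. pos_def (P t)"
    and odeP: "solves_ode P (\<lambda>t X. A t ** X + X ** transpose (A t) + \<alpha> t *\<^sub>R X
                                    + (1 / \<alpha> t) *\<^sub>R (B t ** transpose (B t)))"
    and perQ: "periodic T Q" and posQ: "\<And>t. pos_def (Q t)"
    and odeQ: "solves_ode Q (\<lambda>t X. - (X ** A t + transpose (A t) ** X + \<alpha> t *\<^sub>R X
                                    + transpose (C t) ** C t))"
  shows "ellipsoid_size T C P =
           (1 / T) * integral {0..T} (\<lambda>t. trace (transpose (B t) ** Q t ** B t) / \<alpha> t)"
proof -
  define g where "g t = trace (transpose (B t) ** Q t ** B t) / \<alpha> t" for t
  define h where "h t = trace (C t ** P t ** transpose (C t))" for t
  define f where "f t = trace (Q t ** P t)" for t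
  obtain SP where SP: "finite SP" "\<And>t. t \<in> {0..T} - SP \<Longrightarrow> (P has_vector_derivative
      (A t ** P t + P t ** transpose (A t) + \<alpha> t *\<^sub>R P t
        + (1 / \<alpha> t) *\<^sub>R (B t ** transpose (B t)))) (at t)"
    using odeP unfolding solves_ode_def by blast
  obtain SQ where SQ: "finite SQ" "\<And>t. t \<in> {0..T} - SQ \<Longrightarrow> (Q has_vector_derivative
      (- (Q t ** A t + transpose (A t) ** Q t + \<alpha> t *\<^sub>R Q t
                                    + transpose (C t) ** C t))) (at t)"
    using odeQ unfolding solves_ode_def by blast
  have alg: "trace (Q t ** (A t ** P t + P t ** transpose (A t) + \<alpha> t *\<^sub>R P t
        + (1 / \<alpha> t) *\<^sub>R (B t ** transpose (B t)))
      + (- (Q t ** A t + transpose (A t) ** Q t + \<alpha> t *\<^sub>R Q t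
                                    + transpose (C t) ** C t)) ** P t) = g t - h t" for t
  proof -
    have e1: "trace (transpose (A t) ** Q t ** P t) = trace (Q t ** P t ** transpose (A t))"
      by (metis matrix_mul_assoc trace_mul_sym)
    have e2: "trace (transpose (C t) ** C t ** P t) = trace (C t ** P t ** transpose (C t))"
      by (metis matrix_mul_assoc trace_mul_sym)
    have e3: "trace (Q t ** B t ** transpose (B t)) = trace (transpose (B t) ** Q t ** B t)"
      by (metis matrix_mul_assoc trace_mul_sym)
    show ?thesis
      unfolding g_def h_def
      by (simp add: matrix_add_ldistrib mm_add_r mm_neg_l mm_diff_r trace_add trace_uminus trace_scaleR
          matrix_scalar_ac scalar_matrix_assoc[symmetric] matrix_mul_assoc e1 e2 e3
          trace_sub)
  qed
  have deriv: "(f has_vector_derivative (g t - h t)) (at t)" if "t \<in> {0<..<T} - (SP \<union> SQ)" for t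
  proof -
    have "t \<in> {0..T} - SP" "t \<in> {0..T} - SQ" using that by auto
    from bounded_bilinear.has_vector_derivative[OF bb_trace SQ(2)[OF this(2)] SP(2)[OF this(1)]]
    show ?thesis unfolding f_def alg[symmetric] by (simp add: trace_add)
  qed
  have contP: "continuous_on {0..T} P" and contQ: "continuous_on {0..T} Q"
    using odeP odeQ unfolding solves_ode_def by (auto intro: continuous_on_subset)
  have contf: "continuous_on {0..T} f"
    unfolding f_def
    using bilinear_continuous_on_compose[OF contQ contP, of "\<lambda>X Y. trace (X ** Y)"] bb_trace
    by (simp add: bilinear_conv_bounded_bilinear)
  have "((\<lambda>t. g t - h t) has_integral (f T - f 0)) {0..T}"
    by (rule fundamental_theorem_of_calculus_interior_strong[of "SP \<union> SQ"])
       (use SP SQ T deriv contf in auto)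
  moreover have "f T = f 0"
    using perP perQ unfolding f_def periodic_def by (metis add_0)
  ultimately have gh: "((\<lambda>t. g t - h t) has_integral 0) {0..T}" by simp
  have "integral {0..T} h = integral {0..T} g"
  proof (cases "h integrable_on {0..T}")
    case True
    then have "(\<lambda>t. (g t - h t) + h t) integrable_on {0..T}"
      using gh by (intro integrable_add) auto
    then have gi: "g integrable_on {0..T}" by simp
    have "integral {0..T} (\<lambda>t. g t - h t) = integral {0..T} g - integral {0..T} h"
      by (rule integral_diff[OF gi True])
    then show ?thesis using gh by (simp add: integral_unique)
  next
    case False
    have "\<not> g integrable_on {0..T}"
    proof
      assume gi: "g integrable_on {0..T}"
      have "(\<lambda>t. g t - (g t - h t)) integrable_on {0..T}"
        by (rule integrable_diff[OF gi]) (use gh in blast)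
      then show False using False by simp
    qed
    then show ?thesis using False by (simp add: not_integrable_integral)
  qed
  then show ?thesis unfolding ellipsoid_size_def g_def h_def by simp
qed

end
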